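(* Let $m\geq1$ and $k\geq2$ be integers, and let $H$ be an $m$-connected, $(n-km+2m-1)$-closed graph of order $n\geq(7k-2)m+4$. If $e(H)\geq\binom{n-(k-1)m-2}{2}+(k-1)m^2+(k+1)m+3$, then $\omega(H)\geq n-(k-1)m-1$.
   Context: All graphs are finite and simple; $e(H)$ is the number of edges and $\omega(H)$ the clique number. A graph $H$ is $l$-closed if every pair of nonadjacent vertices $u,v$ satisfies $d_H(u)+d_H(v)<l$. *)

theory Defs
  imports Main
begin

definition simple_graph :: "'a set \<Rightarrow> ('a \<Rightarrow> 'a \<Rightarrow> bool) \<Rightarrow> bool" where
  "simple_graph V adj \<longleftrightarrow> finite V \<and>
     (\<forall>u v. adj u v \<longrightarrow> u \<in> V \<and> v \<in> V \<and> u \<noteq> v) \<and>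
     (\<forall>u v. adj u v \<longrightarrow> adj v u)"

definition degree :: "'a set \<Rightarrow> ('a \<Rightarrow> 'a \<Rightarrow> bool) \<Rightarrow> 'a \<Rightarrow> nat" where
  "degree V adj v = card {u \<in> V. adj v u}"

definition num_edges :: "'a set \<Rightarrow> ('a \<Rightarrow> 'a \<Rightarrow> bool) \<Rightarrow> nat" where
  "num_edges V adj = card {{u, v} | u v. u \<in> V \<and> v \<in> V \<and> adj u v}"

definition is_clique :: "'a set \<Rightarrow> ('a \<Rightarrow> 'a \<Rightarrow> bool) \<Rightarrow> 'a set \<Rightarrow> bool" where
  "is_clique V adj S \<longleftrightarrow> S \<subseteq> V \<and> (\<forall>u\<in>S. \<forall>v\<in>S. u \<noteq> v \<longrightarrow> adj u v)"

definition clique_number :: "'a set \<Rightarrow> ('a \<Rightarrow> 'a \<Rightarrow> bool) \<Rightarrow> nat" where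
  "clique_number V adj = Max {card S | S. is_clique V adj S}"

definition connected_on :: "'a set \<Rightarrow> ('a \<Rightarrow> 'a \<Rightarrow> bool) \<Rightarrow> bool" where
  "connected_on W adj \<longleftrightarrow> W \<noteq> {} \<and>
     (\<forall>u\<in>W. \<forall>v\<in>W. (\<lambda>x y. adj x y \<and> x \<in> W \<and> y \<in> W)\<^sup>*\<^sup>* u v)"

definition k_connected :: "nat \<Rightarrow> 'a set \<Rightarrow> ('a \<Rightarrow> 'a \<Rightarrow> bool) \<Rightarrow> bool" where
  "k_connected m V adj \<longleftrightarrow> card V > m \<and>
     (\<forall>X. X \<subseteq> V \<and> card X < m \<longrightarrow> connected_on (V - X) adj)"

definition l_closed :: "int \<Rightarrow> 'a set \<Rightarrow> ('a \<Rightarrow> 'a \<Rightarrow> bool) \<Rightarrow> bool" where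
  "l_closed l V adj \<longleftrightarrow> (\<forall>u\<in>V. \<forall>v\<in>V. u \<noteq> v \<and> \<not> adj u v \<longrightarrow>
     int (degree V adj u + degree V adj v) < l)"

end

theory Submission
  imports Defs
begin
lemma b2poly:
  fixes i j u q m K p n l t :: int
  assumes "i\<ge>0" "j\<ge>0" "u\<ge>0" "q=0 \<or> q=1" "q=0 \<Longrightarrow> i=0 \<Longrightarrow> u\<ge>1"
    "m = 1+i" "K = m+j" "p = 3*K+2*m+2+u" "n = K+2*p+q" "l = n-K+m-1" "t = n-K-2"
  shows "2*p*(n-1) + (n-p)*(l-1) < 2*(t*(t-1) + 2*(K+2)*(m+1) + 2)"
proof -
  have nn: "i*j \<ge> 0" "i*u \<ge> 0" "j*u \<ge> 0" "i*i \<ge> 0" "j*j \<ge> 0" "u*u\<ge>0"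
    using assms by auto
  consider "q=0" | "q=1" using assms by auto
  then show ?thesis
  proof cases
    case 1
    then have "2*(t*(t-1) + 2*(K+2)*(m+1) + 2) - (2*p*(n-1) + (n-p)*(l-1))
       = -8 + 20*i + 28*i*j + 15*i*u + 28*i*i + 2*j + 8*j*u + 6*j*j + 7*u + 2*u*u"
      using assms by (simp add: algebra_simps)
    moreover have "-8 + 20*i + 28*i*j + 15*i*u + 28*i*i + 2*j + 8*j*u + 6*j*j + 7*u + 2*u*u > 0"
    proof (cases "i = 0")
      case True
      then have u1: "u \<ge> 1" using assms 1 by simp
      have "u*u \<ge> 1*1" using u1 by (intro mult_mono) auto
      then show ?thesis using u1 nn assms by linarith
    next
      case False
      then show ?thesis using assms nn by linarith
    qed
    ultimately show ?thesis by linarith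
  next
    case 2
    then have "2*(t*(t-1) + 2*(K+2)*(m+1) + 2) - (2*p*(n-1) + (n-p)*(l-1))
       = 4 + 33*i + 28*i*j + 15*i*u + 28*i*i + 10*j + 8*j*u + 6*j*j + 10*u + 2*u*u"
      using assms by (simp add: algebra_simps)
    then show ?thesis using nn assms by linarith
  qed
qed

lemma b1poly:
  fixes i j u q m K p n l t :: int
  assumes "i\<ge>0" "j\<ge>0" "u\<ge>0" "q=0 \<or> q=1"
    "m = 1+i" "K = m+j" "p = 3*K+2*m+2+u" "n = K+2*p+q" "l = n-K+m-1" "t = n-K-2"
  shows "(p+1)*(p+1-1) + 2*(n-(p+1))*(l-(p+1)) < t*(t-1) + 2*(K+2)*(m+1) + 2"
proof -
  have nn: "i*j \<ge> 0" "i*u \<ge> 0" "j*u \<ge> 0" "i*i \<ge> 0" "j*j \<ge> 0" "u*u\<ge>0"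
    using assms by auto
  consider "q=0" | "q=1" using assms by auto
  then show ?thesis
  proof cases
    case 1
    then have "t*(t-1) + 2*(K+2)*(m+1) + 2 - ((p+1)*(p+1-1) + 2*(n-(p+1))*(l-(p+1)))
       = 6 + 9*i + 8*i*j + 6*i*u + 5*i*i + 7*j + 4*j*u + 3*j*j + 5*u + u*u"
      using assms by (simp add: algebra_simps)
    then show ?thesis using nn assms by linarith
  next
    case 2
    then have "t*(t-1) + 2*(K+2)*(m+1) + 2 - ((p+1)*(p+1-1) + 2*(n-(p+1))*(l-(p+1)))
       = 2 + 5*i + 8*i*j + 6*i*u + 5*i*i + 5*j + 4*j*u + 3*j*j + 5*u + u*u"
      using assms by (simp add: algebra_simps)
    then show ?thesis using nn assms by linarith
  qed
qed

lemma convex_quad: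
  fixes a b w n l :: int
  assumes "a \<le> w" "w \<le> b" "a < b"
    and "a*(a-1) + 2*(n-a)*(l-a) < M" "b*(b-1) + 2*(n-b)*(l-b) < M"
  shows "w*(w-1) + 2*(n-w)*(l-w) < M"
proof -
  define g where "g x = x*(x-1) + 2*(n-x)*(l-x)" for x :: int
  have id: "(b-w)*g a + (w-a)*g b - (b-a)*g w = 3*(b-a)*(w-a)*(b-w)"
    unfolding g_def by (simp add: algebra_simps)
  have "3*(b-a)*(w-a)*(b-w) \<ge> 0" using assms by simp
  then have "(b-a)*g w \<le> (b-w)*g a + (w-a)*g b" using id by linarith
  also have "\<dots> \<le> (b-w)*(M-1) + (w-a)*(M-1)"
    using assms unfolding g_def by (intro add_mono mult_left_mono) auto
  also have "\<dots> = (b-a)*(M-1)" by (simp add: algebra_simps)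
  finally have "(b-a)*g w \<le> (b-a)*(M-1)" .
  then have "g w \<le> M-1" using assms by simp
  then show ?thesis unfolding g_def by simp
qed

lemma arith_main:
  fixes n m K w e l t :: int
  assumes "m \<ge> 1" "K \<ge> m" "n \<ge> 7*K+5*m+4" "0 \<le> w" "w \<le> t"
    and lt: "l = n-K+m-1" "t = n-K-2"
    and H1: "2*e \<le> w*(w-1) + 2*(n-w)*(l-w)"
    and H2: "4*e \<le> 2*w*(n-1) + (n-w)*(l-1)"
    and Hy: "2*e \<ge> t*(t-1) + 2*(K+2)*(m+1) + 2"
  shows False
proof -
  define p where "p = (n-K) div 2"
  define q where "q = (n-K) mod 2"
  have nk: "n - K = 2*p+q" unfolding p_def q_def by simp
  have q01: "q=0 \<or> q=1" unfolding q_def by auto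
  define i where "i = m-1"
  define j where "j = K-m"
  define u where "u = p-(3*K+2*m+2)"
  have i0: "i \<ge> 0" "j\<ge>0" using assms unfolding i_def j_def by auto
  have u0: "u \<ge> 0" using assms nk q01 unfolding u_def by linarith
  have u1: "u \<ge> 1" if "q=0" "i=0" using assms nk that unfolding u_def i_def by linarith
  have eqs: "m = 1+i" "K = m+j" "p = 3*K+2*m+2+u" "n = K+2*p+q"
    unfolding i_def j_def u_def using nk by auto
  show False
  proof (cases "w \<le> p")
    case True
    have "2*w*(n-1) + (n-w)*(l-1) + (p-w)*(n+K-m) = 2*p*(n-1) + (n-p)*(l-1)"
      unfolding lt(1) by (simp add: algebra_simps)
    moreover have "(p-w)*(n+K-m) \<ge> 0" using True assms by simp
    moreover have "2*p*(n-1) + (n-p)*(l-1) < 2*(t*(t-1) + 2*(K+2)*(m+1) + 2)"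
      using b2poly[OF i0 u0 q01 u1 eqs lt] by blast
    moreover have "\<And>X A B C. A + C = B \<Longrightarrow> 0 \<le> C \<Longrightarrow> B < 2*X \<Longrightarrow> 4*e \<le> A \<Longrightarrow> X \<le> 2*e \<Longrightarrow> False"
      by linarith
    ultimately show False using H2 Hy by blast
  next
    case False
    have "w*(w-1) + 2*(n-w)*(l-w) < t*(t-1) + 2*(K+2)*(m+1) + 2"
    proof (rule convex_quad[of "p+1" w t])
      show "p+1 \<le> w" using False by simp
      show "w \<le> t" by fact
      show "p+1 < t" using eqs lt u0 i0 q01 by linarith
      show "(p+1)*(p+1-1) + 2*(n-(p+1))*(l-(p+1)) < t*(t-1) + 2*(K+2)*(m+1) + 2"
        using b1poly[OF i0 u0 q01 eqs lt] by blast
      have "n - t = K+2" "l - t = m+1" using lt by auto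
      then show "t*(t-1) + 2*(n-t)*(l-t) < t*(t-1) + 2*(K+2)*(m+1) + 2" by simp
    qed
    then show False using H1 Hy by linarith
  qed
qed

lemma two_choose2: "2 * (c choose 2) = c * (c - (1::nat))"
proof -
  have "even (c * (c - 1))" by auto
  then show ?thesis by (simp add: choose_two)
qed

lemma sg_facts:
  assumes "simple_graph V adj"
  shows "finite V" "\<And>u v. adj u v \<Longrightarrow> u \<in> V" "\<And>u v. adj u v \<Longrightarrow> v \<in> V"
    "\<And>u v. adj u v \<Longrightarrow> u \<noteq> v" "\<And>u v. adj u v \<Longrightarrow> adj v u"
  using assms unfolding simple_graph_def by blast+

lemma edges_finite:
  assumes "simple_graph V adj"
  shows "finite {{u, v} | u v. u \<in> V \<and> v \<in> V \<and> adj u v}"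
proof -
  have "{{u, v} | u v. u \<in> V \<and> v \<in> V \<and> adj u v} \<subseteq> Pow V" by auto
  then show ?thesis using sg_facts(1)[OF assms] finite_subset by blast
qed

lemma deg_eq:
  assumes sg: "simple_graph V adj" and v: "v \<in> V"
  shows "degree V adj v = card {e \<in> {{u, v} | u v. u \<in> V \<and> v \<in> V \<and> adj u v}. v \<in> e}"
proof -
  let ?E = "{{u, v} | u v. u \<in> V \<and> v \<in> V \<and> adj u v}"
  have "bij_betw (\<lambda>u. {v,u}) {u \<in> V. adj v u} {e \<in> ?E. v \<in> e}"
  proof (rule bij_betwI')
    fix x y assume "x \<in> {u \<in> V. adj v u}" "y \<in> {u \<in> V. adj v u}"
    then show "({v, x} = {v, y}) = (x = y)" by (auto simp: doubleton_eq_iff)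
  next
    fix x assume "x \<in> {u \<in> V. adj v u}"
    then show "{v, x} \<in> {e \<in> ?E. v \<in> e}" using v by auto
  next
    fix e assume "e \<in> {e \<in> ?E. v \<in> e}"
    then obtain a b where e: "e = {a,b}" "a \<in> V" "b \<in> V" "adj a b" "v \<in> e" by auto
    show "\<exists>x\<in>{u \<in> V. adj v u}. e = {v, x}"
    proof (cases "v = a")
      case True then show ?thesis using e by auto
    next
      case False then have "v = b" using e by auto
      then show ?thesis using e sg_facts(5)[OF sg] by (intro bexI[of _ a]) auto
    qed
  qed
  then show ?thesis unfolding degree_def by (rule bij_betw_same_card)
qed

lemma handshake:
  assumes sg: "simple_graph V adj"
  shows "2 * num_edges V adj = (\<Sum>v\<in>V. degree V adj v)"
proof -
  let ?E = "{{u, v} | u v. u \<in> V \<and> v \<in> V \<and> adj u v}"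
  have "(\<Sum>v\<in>V. card {e \<in> ?E. v \<in> e}) = 2 * card ?E"
  proof (rule sum_multicount)
    show "finite V" using sg_facts(1)[OF sg] .
    show "finite ?E" using edges_finite[OF sg] .
    show "\<forall>e\<in>?E. card {v \<in> V. v \<in> e} = 2"
    proof
      fix e assume "e \<in> ?E"
      then obtain a b where e: "e = {a,b}" "a \<in> V" "b \<in> V" "adj a b" by auto
      then have "a \<noteq> b" using sg_facts(4)[OF sg] by blast
      moreover have "{v \<in> V. v \<in> e} = {a,b}" using e by auto
      ultimately show "card {v \<in> V. v \<in> e} = 2" by simp
    qed
  qed
  moreover have "(\<Sum>v\<in>V. degree V adj v) = (\<Sum>v\<in>V. card {e \<in> ?E. v \<in> e})"
    using deg_eq[OF sg] by simp
  ultimately show ?thesis unfolding num_edges_def by simp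
qed

lemma edges_bound:
  assumes sg: "simple_graph V adj" and C: "C \<subseteq> V"
  shows "num_edges V adj \<le> (card C choose 2) + (\<Sum>v\<in>V-C. degree V adj v)"
proof -
  let ?E = "{{u, v} | u v. u \<in> V \<and> v \<in> V \<and> adj u v}"
  have fin: "finite V" using sg_facts(1)[OF sg] .
  have "?E \<subseteq> {B. B \<subseteq> C \<and> card B = 2} \<union> (\<Union>v\<in>V-C. {e \<in> ?E. v \<in> e})"
  proof
    fix e assume "e \<in> ?E"
    then obtain a b where e: "e = {a,b}" "a \<in> V" "b \<in> V" "adj a b" by auto
    then have "a \<noteq> b" using sg_facts(4)[OF sg] by blast
    show "e \<in> {B. B \<subseteq> C \<and> card B = 2} \<union> (\<Union>v\<in>V-C. {e \<in> ?E. v \<in> e})"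
    proof (cases "a \<in> C \<and> b \<in> C")
      case True then show ?thesis using e \<open>a \<noteq> b\<close> by auto
    next
      case False then show ?thesis using e \<open>e \<in> ?E\<close> by auto
    qed
  qed
  have finC: "finite C" using fin C finite_subset by blast
  have "finite {B. B \<subseteq> C \<and> card B = 2}"
    by (rule finite_subset[of _ "Pow C"]) (use finC in auto)
  with this \<open>?E \<subseteq> _\<close> have "card ?E \<le> card ({B. B \<subseteq> C \<and> card B = 2} \<union> (\<Union>v\<in>V-C. {e \<in> ?E. v \<in> e}))"
    by (intro card_mono) (use fin C finite_subset edges_finite[OF sg] in auto)
  also have "\<dots> \<le> card {B. B \<subseteq> C \<and> card B = 2} + card (\<Union>v\<in>V-C. {e \<in> ?E. v \<in> e})"
    by (rule card_Un_le)
  also have "\<dots> \<le> (card C choose 2) + (\<Sum>v\<in>V-C. card {e \<in> ?E. v \<in> e})"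
    using n_subsets[OF finC, of 2] card_UN_le[of "V-C" "\<lambda>v. {e \<in> ?E. v \<in> e}"] fin
    by (intro add_mono) auto
  also have "(\<Sum>v\<in>V-C. card {e \<in> ?E. v \<in> e}) = (\<Sum>v\<in>V-C. degree V adj v)"
    using deg_eq[OF sg] by simp
  finally show ?thesis unfolding num_edges_def .
qed

lemma degree_le:
  assumes sg: "simple_graph V adj" and v: "v \<in> V"
  shows "degree V adj v \<le> card V - 1"
proof -
  have "{u \<in> V. adj v u} \<subseteq> V - {v}" using sg_facts(4)[OF sg] by auto
  then have "degree V adj v \<le> card (V - {v})" unfolding degree_def
    using sg_facts(1)[OF sg] by (intro card_mono) auto
  then show ?thesis using v sg_facts(1)[OF sg] by simp
qed

theorem lemma3p1:
  fixes V :: "'a set" and adj :: "'a \<Rightarrow> 'a \<Rightarrow> bool" and m k n :: nat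
  assumes "simple_graph V adj"
    and "m \<ge> 1" and "k \<ge> 2"
    and "card V = n"
    and "k_connected m V adj"
    and "l_closed (int n - int k * int m + 2 * int m - 1) V adj"
    and "n \<ge> (7 * k - 2) * m + 4"
    and "num_edges V adj \<ge> ((n - (k - 1) * m - 2) choose 2) + (k - 1) * m^2 + (k + 1) * m + 3"
  shows "clique_number V adj \<ge> n - (k - 1) * m - 1"
proof (rule ccontr)
  assume neg: "\<not> clique_number V adj \<ge> n - (k - 1) * m - 1"
  note sg = assms(1)
  have finV: "finite V" using sg_facts(1)[OF sg] .
  define K where "K = (k - 1) * m"
  define \<omega> where "\<omega> = clique_number V adj"
  define e where "e = num_edges V adj"
  define l :: int where "l = int n - int K + int m - 1"
  define t :: int where "t = int n - int K - 2"
  have "1 \<le> k - 1" using assms(3) by arith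
  then have Km: "K \<ge> m" unfolding K_def using mult_le_mono1[of 1 "k-1" m] by simp
  have Kint: "int K = int k * int m - int m" unfolding K_def using assms(3)
    by (simp add: of_nat_diff algebra_simps)
  have nK: "n \<ge> 7*K+5*m+4"
  proof -
    have "(7 * k - 2) * m = 7*K + 5*m" unfolding K_def using assms(3)
      by (simp add: algebra_simps diff_mult_distrib)
    then show ?thesis using assms(7) by simp
  qed
  have lc: "int (degree V adj u) + int (degree V adj v) < l"
    if "u \<in> V" "v \<in> V" "u \<noteq> v" "\<not> adj u v" for u v
  proof -
    have "int (degree V adj u) + int (degree V adj v) < int n - int k * int m + 2 * int m - 1"
      using assms(6) that unfolding l_closed_def by (metis of_nat_add)
    then show ?thesis unfolding l_def Kint by linarith
  qed
  let ?CS = "{card S | S. is_clique V adj S}"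
  have finCS: "finite ?CS"
  proof (rule finite_subset[of _ "{0..card V}"])
    show "?CS \<subseteq> {0..card V}"
      using finV by (auto simp: is_clique_def intro: card_mono)
  qed auto
  have "card {} \<in> ?CS" unfolding is_clique_def by (intro CollectI exI[of _ "{}"]) auto
  then have neCS: "?CS \<noteq> {}" by blast
  have \<omega>_max: "card S \<le> \<omega>" if "is_clique V adj S" for S
    unfolding \<omega>_def clique_number_def using finCS that by (intro Max_ge) auto
  obtain C where C: "is_clique V adj C" "card C = \<omega>"
    using Max_in[OF finCS neCS] unfolding \<omega>_def clique_number_def by auto
  have CV: "C \<subseteq> V" using C unfolding is_clique_def by auto
  have finC: "finite C" using CV finV finite_subset by blast
  have \<omega>t: "int \<omega> \<le> t" using neg unfolding t_def \<omega>_def K_def by linarith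
  have degout: "int (degree V adj v) \<le> l - int \<omega>" if v: "v \<in> V - C" for v
  proof -
    have "\<exists>w\<in>C. \<not> adj v w"
    proof (rule ccontr)
      assume "\<not> (\<exists>w\<in>C. \<not> adj v w)"
      then have "is_clique V adj (insert v C)"
        using C(1) v sg_facts(5)[OF sg] unfolding is_clique_def by auto
      then have "card (insert v C) \<le> \<omega>" by (rule \<omega>_max)
      then show False using v finC C(2) by simp
    qed
    then obtain w where w: "w \<in> C" "\<not> adj v w" by blast
    have vw: "v \<noteq> w" using v w by auto
    have "C - {w} \<subseteq> {u \<in> V. adj w u}" using C(1) w(1) unfolding is_clique_def by auto
    then have "card (C - {w}) \<le> degree V adj w" unfolding degree_def
      using finV by (intro card_mono) auto
    then have "\<omega> - 1 \<le> degree V adj w" using C(2) w finC by simp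
    moreover have "\<omega> \<ge> 1" using C(2) w finC by (metis card_0_eq empty_iff less_one not_le)
    ultimately have "int \<omega> - 1 \<le> int (degree V adj w)" by linarith
    moreover have "int (degree V adj v) + int (degree V adj w) < l"
      using lc[of v w] v w CV vw by auto
    ultimately show ?thesis by linarith
  qed
  have e1: "int e \<le> int (card C choose 2) + int (\<Sum>v\<in>V-C. degree V adj v)"
    using edges_bound[OF sg CV] unfolding e_def by linarith
  have "int (\<Sum>v\<in>V-C. degree V adj v) = (\<Sum>v\<in>V-C. int (degree V adj v))" by simp
  also have "\<dots> \<le> (\<Sum>v\<in>V-C. l - int \<omega>)" by (rule sum_mono) (rule degout)
  also have "\<dots> = int (n - \<omega>) * (l - int \<omega>)"
    using finV CV C(2) assms(4) by (simp add: card_Diff_subset finC)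
  finally have "int (\<Sum>v\<in>V-C. degree V adj v) \<le> int (n - \<omega>) * (l - int \<omega>)" .
  with e1 have b1: "int e \<le> int (card C choose 2) + int (n - \<omega>) * (l - int \<omega>)" by linarith
  have "2 * (card C choose 2) = \<omega> * (\<omega> - 1)" using two_choose2 C(2) by simp
  then have "2 * int (card C choose 2) = int \<omega> * (int \<omega> - 1)"
    using C finC by (cases "\<omega> = 0") (simp_all add: of_nat_diff, metis of_nat_mult of_nat_numeral of_nat_1 of_nat_diff One_nat_def Suc_leI neq0_conv)
  moreover have "int (n - \<omega>) = int n - int \<omega>"
  proof -
    have "\<omega> \<le> n" using card_mono[OF finV CV] C(2) assms(4) by simp
    then show ?thesis by (simp add: of_nat_diff)
  qed
  ultimately have H1: "2 * int e \<le> int \<omega> * (int \<omega> - 1) + 2 * (int n - int \<omega>) * (l - int \<omega>)"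
    using b1 by (simp add: algebra_simps)
  define A where "A = {v \<in> V. l \<le> 2 * int (degree V adj v)}"
  have AV: "A \<subseteq> V" unfolding A_def by auto
  have finA: "finite A" using AV finV finite_subset by blast
  have "is_clique V adj A"
    unfolding is_clique_def
  proof (intro conjI ballI impI)
    show "A \<subseteq> V" by (rule AV)
    fix u v assume "u \<in> A" "v \<in> A" "u \<noteq> v"
    then show "adj u v" using lc[of u v] unfolding A_def by fastforce
  qed
  then have a\<omega>: "card A \<le> \<omega>" by (rule \<omega>_max)
  have "int (2 * e) = (\<Sum>v\<in>V. int (degree V adj v))"
    using handshake[OF sg] unfolding e_def by (metis of_nat_sum)
  also have "\<dots> = (\<Sum>v\<in>A. int (degree V adj v)) + (\<Sum>v\<in>V-A. int (degree V adj v))"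
    using finV AV by (metis sum.subset_diff add.commute)
  finally have s: "2 * int e = (\<Sum>v\<in>A. int (degree V adj v)) + (\<Sum>v\<in>V-A. int (degree V adj v))"
    by simp
  have sA: "(\<Sum>v\<in>A. int (degree V adj v)) \<le> (\<Sum>v\<in>A. int n - 1)"
  proof (rule sum_mono)
    fix v assume "v \<in> A"
    then have "degree V adj v \<le> card V - 1" using degree_le[OF sg] AV by auto
    moreover have "card V \<ge> 1" using \<open>v \<in> A\<close> AV finV
      by (metis One_nat_def Suc_leI card_gt_0_iff empty_iff subsetD)
    ultimately show "int (degree V adj v) \<le> int n - 1" using assms(4) by linarith
  qed
  have sB: "(\<Sum>v\<in>V-A. 2 * int (degree V adj v)) \<le> (\<Sum>v\<in>V-A. l - 1)"
    by (rule sum_mono) (auto simp: A_def)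
  have "(\<Sum>v\<in>V-A. 2 * int (degree V adj v)) = 2 * (\<Sum>v\<in>V-A. int (degree V adj v))"
    by (simp add: sum_distrib_left)
  moreover have "(\<Sum>v\<in>A. int n - 1) = int (card A) * (int n - 1)" by simp
  moreover have "(\<Sum>v\<in>V-A. l - 1) = (int n - int (card A)) * (l - 1)"
  proof -
    have "card A \<le> n" using card_mono[OF finV AV] assms(4) by simp
    then show ?thesis using finV AV assms(4) finA by (simp add: card_Diff_subset of_nat_diff)
  qed
  ultimately have b2: "4 * int e \<le> 2 * int (card A) * (int n - 1) + (int n - int (card A)) * (l - 1)"
    using s sA sB by (simp add: algebra_simps)
  have "(int \<omega> - int (card A)) * (2 * (int n - 1) - (l - 1)) \<ge> 0"
    using a\<omega> nK unfolding l_def by (intro mult_nonneg_nonneg) auto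
  then have H2: "4 * int e \<le> 2 * int \<omega> * (int n - 1) + (int n - int \<omega>) * (l - 1)"
    using b2 by (simp add: algebra_simps)
  have tn: "nat t = n - K - 2" "t \<ge> 0" unfolding t_def using nK by auto
  have "num_edges V adj \<ge> (nat t choose 2) + K*m + K + 2*m + 3"
  proof -
    have a8: "num_edges V adj \<ge> ((n - K - 2) choose 2) + (k - 1) * m^2 + (k + 1) * m + 3"
      using assms(8) unfolding K_def .
    have eq1: "(k - 1) * m^2 = K*m" unfolding K_def by (simp add: power2_eq_square)
    have eq2: "(k + 1) * m = K + 2*m" unfolding K_def using assms(3)
      by (simp add: algebra_simps diff_mult_distrib)
    show ?thesis unfolding tn(1) using a8 eq1 eq2 by linarith
  qed
  then have "2 * ((nat t choose 2) + K*m + K + 2*m + 3) \<le> 2 * e" unfolding e_def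
    by (rule mult_le_mono2)
  then have "2 * e \<ge> 2 * (nat t choose 2) + 2*(K*m + K + 2*m + 3)" by (simp add: algebra_simps)
  then have "2 * e \<ge> nat t * (nat t - 1) + 2*(K*m + K + 2*m + 3)" using two_choose2 by metis
  then have "int (2 * e) \<ge> int (nat t * (nat t - 1) + 2*(K*m + K + 2*m + 3))" by linarith
  moreover have "int (nat t * (nat t - 1)) = t * (t - 1)"
  proof -
    have t1: "nat t \<ge> 1" "int (nat t) = t" using tn nK unfolding t_def by auto
    then have "int (nat t * (nat t - 1)) = int (nat t) * (int (nat t) - 1)"
      by (simp add: of_nat_diff)
    then show ?thesis using t1 by simp
  qed
  ultimately have Hy: "2 * int e \<ge> t * (t - 1) + 2 * (int K + 2) * (int m + 1) + 2"
    by (simp add: algebra_simps)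
  show False
    using arith_main[of "int m" "int K" "int n" "int \<omega>" t l "int e"] assms(2) Km nK \<omega>t
      H1 H2 Hy unfolding l_def t_def by linarith
qed
end
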